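(* Let $\nu:\mathcal{P}(\mathbf{N})\to\mathbf{R}$ be an abstract upper density and let $\mathcal{Z}_\nu=\{A\subseteq\mathbf{N}:\nu(A)=0\}$. Then there exists a normalized capacity $\rho:\mathscr{B}(\mathrm{Ult}(\mathcal{Z}_\nu))\to\mathbf{R}$ such that for every $A\subseteq\mathbf{N}$, $$\nu(A)=\int_{\mathrm{Ult}(\mathcal{Z}_\nu)}\mu_{\mathcal{F}}(A)\,\mathrm{d}\rho(\mathcal{F}).$$
   Context: An abstract upper density is a set function $\nu:\mathcal{P}(\mathbf{N})\to\mathbf{R}$ that is a normalized capacity (monotone, $\nu(\emptyset)=0$, $\nu(\mathbf{N})=1$), diffuse ($\nu(A)=0$ for every finite $A$), and subadditive ($\nu(A\cup B)\le\nu(A)+\nu(B)$). For an ideal $\mathcal{I}$ on $\mathbf{N}$ (closed under subsets and finite unions, not containing $\mathbf{N}$, containing all finite sets) with dual filter $\mathcal{I}^\star=\{A:\mathbf{N}\setminus A\in\mathcal{I}\}$: $\mathrm{Ult}(\mathcal{I})$ is the set of ultrafilters $\mathcal{F}$ on $\mathbf{N}$ with $\mathcal{I}^\star\subseteq\mathcal{F}$, with the topology induced from the Stone–Čech space $\beta\mathbf{N}$ (basic clopen sets $\{\mathcal{F}:A\in\mathcal{F}\}$), $\mathscr{B}$ is the Borel $\sigma$-algebra, and $\mu_{\mathcal{F}}(A)=1$ if $A\in\mathcal{F}$ and $0$ otherwise. A normalized capacity on a $\sigma$-algebra is a monotone set function with value $0$ at $\emptyset$ and $1$ at the whole space. The Choquet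 integral of a bounded function $f$ with respect to a normalized capacity $\rho$ on $S$ is $\int_0^\infty\rho(f\ge t)\,\mathrm{d}t+\int_{-\infty}^0[\rho(f\ge t)-1]\,\mathrm{d}t$. *)

theory Defs
  imports "HOL-Analysis.Analysis"
begin

definition abstract_upper_density :: "(nat set \<Rightarrow> real) \<Rightarrow> bool" where
  "abstract_upper_density \<nu> \<longleftrightarrow>
     (\<forall>A B. A \<subseteq> B \<longrightarrow> \<nu> A \<le> \<nu> B) \<and> \<nu> {} = 0 \<and> \<nu> UNIV = 1 \<and>
     (\<forall>A. finite A \<longrightarrow> \<nu> A = 0) \<and>
     (\<forall>A B. \<nu> (A \<union> B) \<le> \<nu> A + \<nu> B)"

definition is_ultrafilter :: "nat set set \<Rightarrow> bool" where
  "is_ultrafilter F \<longleftrightarrow>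
     UNIV \<in> F \<and> {} \<notin> F \<and>
     (\<forall>A B. A \<in> F \<longrightarrow> A \<subseteq> B \<longrightarrow> B \<in> F) \<and>
     (\<forall>A B. A \<in> F \<longrightarrow> B \<in> F \<longrightarrow> A \<inter> B \<in> F) \<and>
     (\<forall>A. A \<in> F \<or> - A \<in> F)"

definition dual_filter :: "nat set set \<Rightarrow> nat set set" where
  "dual_filter I = {A. - A \<in> I}"

definition Ult :: "nat set set \<Rightarrow> nat set set set" where
  "Ult I = {F. is_ultrafilter F \<and> dual_filter I \<subseteq> F}"

text \<open>Basic clopen sets of the subspace topology inherited from beta N.\<close>
definition ult_basic :: "nat set set \<Rightarrow> nat set \<Rightarrow> nat set set set" where
  "ult_basic I A = {F \<in> Ult I. A \<in> F}"

definition ult_open :: "nat set set \<Rightarrow> nat set set set \<Rightarrow> bool" where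
  "ult_open I U \<longleftrightarrow> U \<subseteq> Ult I \<and> (\<forall>F\<in>U. \<exists>A. A \<in> F \<and> ult_basic I A \<subseteq> U)"

definition ult_borel :: "nat set set \<Rightarrow> nat set set set set" where
  "ult_borel I = sigma_sets (Ult I) {U. ult_open I U}"

definition normalized_capacity :: "'a set \<Rightarrow> 'a set set \<Rightarrow> ('a set \<Rightarrow> real) \<Rightarrow> bool" where
  "normalized_capacity S \<Sigma> \<rho> \<longleftrightarrow>
     (\<forall>A\<in>\<Sigma>. \<forall>B\<in>\<Sigma>. A \<subseteq> B \<longrightarrow> \<rho> A \<le> \<rho> B) \<and> \<rho> {} = 0 \<and> \<rho> S = 1"

definition choquet_integral :: "'a set \<Rightarrow> ('a set \<Rightarrow> real) \<Rightarrow> ('a \<Rightarrow> real) \<Rightarrow> real" where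
  "choquet_integral S \<rho> f =
     (LBINT t:{0..}. \<rho> {x \<in> S. f x \<ge> t}) + (LBINT t:{..<0}. \<rho> {x \<in> S. f x \<ge> t} - 1)"

definition mu_uf :: "nat set set \<Rightarrow> nat set \<Rightarrow> real" where
  "mu_uf F A = (if A \<in> F then 1 else 0)"

end

theory Submission
  imports Defs
begin

lemma aud_facts:
  assumes "abstract_upper_density \<nu>"
  shows "\<And>A B. A \<subseteq> B \<Longrightarrow> \<nu> A \<le> \<nu> B" "\<nu> {} = 0" "\<nu> UNIV = 1"
    "\<And>A B. \<nu> (A \<union> B) \<le> \<nu> A + \<nu> B" "\<And>A. \<nu> A \<ge> 0"
  using assms unfolding abstract_upper_density_def by (auto, metis empty_subsetI)

lemma ult_exists:
  fixes I :: "nat set set" and C :: "nat set"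
  assumes sub: "\<And>Y Z. Y \<in> I \<Longrightarrow> Z \<subseteq> Y \<Longrightarrow> Z \<in> I"
    and un: "\<And>Y Z. Y \<in> I \<Longrightarrow> Z \<in> I \<Longrightarrow> Y \<union> Z \<in> I"
    and C: "C \<notin> I" and e: "{} \<in> I"
  shows "\<exists>F \<in> Ult I. C \<in> F"
proof -
  define I' where "I' = {Y. \<exists>i\<in>I. Y \<subseteq> i \<union> - C}"
  define \<A> where "\<A> = {J. I' \<subseteq> J \<and> UNIV \<notin> J \<and> (\<forall>Y\<in>J. \<forall>Z. Z \<subseteq> Y \<longrightarrow> Z \<in> J)
       \<and> (\<forall>Y\<in>J. \<forall>Z\<in>J. Y \<union> Z \<in> J)}"
  have I'A: "I' \<in> \<A>"
  proof -
    have "UNIV \<notin> I'"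
    proof
      assume "UNIV \<in> I'"
      then obtain i where "i \<in> I" "UNIV \<subseteq> i \<union> - C" unfolding I'_def by blast
      then have "C \<subseteq> i" by blast
      with sub \<open>i \<in> I\<close> C show False by blast
    qed
    moreover have "\<forall>Y\<in>I'. \<forall>Z\<in>I'. Y \<union> Z \<in> I'"
    proof (intro ballI)
      fix Y Z assume "Y \<in> I'" "Z \<in> I'"
      then obtain i j where "i \<in> I" "j \<in> I" "Y \<subseteq> i \<union> - C" "Z \<subseteq> j \<union> - C"
        unfolding I'_def by blast
      then show "Y \<union> Z \<in> I'" unfolding I'_def using un[of i j] by blast
    qed
    moreover have "\<forall>Y\<in>I'. \<forall>Z. Z \<subseteq> Y \<longrightarrow> Z \<in> I'" unfolding I'_def by blast
    ultimately show ?thesis unfolding \<A>_def by blast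
  qed
  have "\<exists>M\<in>\<A>. \<forall>X\<in>\<A>. M \<subseteq> X \<longrightarrow> X = M"
  proof (rule subset_Zorn_nonempty)
    show "\<A> \<noteq> {}" using I'A by blast
  next
    fix \<C> assume ne: "\<C> \<noteq> {}" and ch: "subset.chain \<A> \<C>"
    then have CA: "\<C> \<subseteq> \<A>" and lin: "\<And>X Y. X \<in> \<C> \<Longrightarrow> Y \<in> \<C> \<Longrightarrow> X \<subseteq> Y \<or> Y \<subseteq> X"
      unfolding subset.chain_def by auto
    show "\<Union>\<C> \<in> \<A>"
      unfolding \<A>_def
    proof (intro CollectI conjI ballI allI impI)
      show "I' \<subseteq> \<Union>\<C>" using ne CA unfolding \<A>_def by blast
      show "UNIV \<notin> \<Union>\<C>" using CA unfolding \<A>_def by blast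
      fix Y Z assume "Y \<in> \<Union>\<C>" "Z \<subseteq> Y" then show "Z \<in> \<Union>\<C>" using CA unfolding \<A>_def by blast
    next
      fix Y Z assume "Y \<in> \<Union>\<C>" "Z \<in> \<Union>\<C>"
      then obtain J K where "J \<in> \<C>" "K \<in> \<C>" "Y \<in> J" "Z \<in> K" by blast
      then show "Y \<union> Z \<in> \<Union>\<C>" using lin[of J K] CA unfolding \<A>_def by blast
    qed
  qed
  then obtain M where MA: "M \<in> \<A>" and max: "\<And>X. X \<in> \<A> \<Longrightarrow> M \<subseteq> X \<Longrightarrow> X = M" by blast
  have Msub: "\<And>Y Z. Y \<in> M \<Longrightarrow> Z \<subseteq> Y \<Longrightarrow> Z \<in> M" and Mun: "\<And>Y Z. Y \<in> M \<Longrightarrow> Z \<in> M \<Longrightarrow> Y \<union> Z \<in> M"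
    and MU: "UNIV \<notin> M" and MI: "I' \<subseteq> M" using MA unfolding \<A>_def by blast+
  have "{} \<in> I'" unfolding I'_def using e by blast
  then have eM: "{} \<in> M" using MI by blast
  have ext: "UNIV \<in> {Y. \<exists>j\<in>M. Y \<subseteq> j \<union> X}" if "X \<notin> M" for X
  proof (rule ccontr)
    assume nU: "UNIV \<notin> {Y. \<exists>j\<in>M. Y \<subseteq> j \<union> X}"
    let ?J = "{Y. \<exists>j\<in>M. Y \<subseteq> j \<union> X}"
    have j1: "I' \<subseteq> ?J" using MI by blast
    have j2: "\<forall>Y\<in>?J. \<forall>Z. Z \<subseteq> Y \<longrightarrow> Z \<in> ?J" by blast
    have j3: "\<forall>Y\<in>?J. \<forall>Z\<in>?J. Y \<union> Z \<in> ?J"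
    proof (intro ballI)
      fix Y Z assume "Y \<in> ?J" "Z \<in> ?J"
      then obtain i j where "i \<in> M" "j \<in> M" "Y \<subseteq> i \<union> X" "Z \<subseteq> j \<union> X" by blast
      then show "Y \<union> Z \<in> ?J" using Mun[of i j] by blast
    qed
    have "?J \<in> \<A>" unfolding \<A>_def using j1 j2 j3 nU by blast
    moreover have "M \<subseteq> ?J" by blast
    ultimately have "?J = M" using max by blast
    moreover have "X \<in> ?J" using eM by blast
    ultimately show False using that by blast
  qed
  have dich: "X \<in> M \<or> - X \<in> M" for X
  proof (rule ccontr)
    assume "\<not> (X \<in> M \<or> - X \<in> M)"
    then obtain j1 j2 where "j1 \<in> M" "j2 \<in> M" "UNIV \<subseteq> j1 \<union> X" "UNIV \<subseteq> j2 \<union> - X"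
      using ext[of X] ext[of "-X"] by blast
    then have "UNIV \<subseteq> j1 \<union> j2" by blast
    then have "j1 \<union> j2 = UNIV" by blast
    with Mun[OF \<open>j1 \<in> M\<close> \<open>j2 \<in> M\<close>] MU show False by simp
  qed
  define F where "F = {Y. - Y \<in> M}"
  have "is_ultrafilter F" unfolding is_ultrafilter_def F_def
  proof (intro conjI allI impI)
    show "UNIV \<in> {Y. - Y \<in> M}" using eM by simp
    show "{} \<notin> {Y. - Y \<in> M}" using MU by simp
    fix A B assume "A \<in> {Y. - Y \<in> M}" "A \<subseteq> B" then show "B \<in> {Y. - Y \<in> M}" using Msub by blast
  next
    fix A B assume "A \<in> {Y. - Y \<in> M}" "B \<in> {Y. - Y \<in> M}"
    then show "A \<inter> B \<in> {Y. - Y \<in> M}" using Mun[of "-A" "-B"] by (simp add: Compl_Int)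
  next
    fix A show "A \<in> {Y. - Y \<in> M} \<or> - A \<in> {Y. - Y \<in> M}" using dich[of A] by auto
  qed
  moreover have "dual_filter I \<subseteq> F" unfolding dual_filter_def F_def I'_def using MI I'_def by blast
  moreover have "C \<in> F" unfolding F_def using MI e unfolding I'_def by blast
  ultimately show ?thesis unfolding Ult_def by blast
qed


lemma key_mono:
  assumes a: "abstract_upper_density \<nu>"
    and sb: "ult_basic {A. \<nu> A = 0} A \<subseteq> ult_basic {A. \<nu> A = 0} B"
  shows "\<nu> A \<le> \<nu> B"
proof -
  note f = aud_facts[OF a]
  have "\<nu> (A - B) = 0"
  proof (rule ccontr)
    assume "\<nu> (A - B) \<noteq> 0"
    then have "A - B \<notin> {A. \<nu> A = 0}" by simp
    moreover have "\<And>Y Z. Y \<in> {A. \<nu> A = 0} \<Longrightarrow> Z \<subseteq> Y \<Longrightarrow> Z \<in> {A. \<nu> A = 0}"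
    proof -
      fix Y Z assume "Y \<in> {A. \<nu> A = 0}" "Z \<subseteq> Y"
      then have "\<nu> Z \<le> 0" using f(1)[of Z Y] by simp
      then show "Z \<in> {A. \<nu> A = 0}" using f(5)[of Z] by simp
    qed
    moreover have "\<And>Y Z. Y \<in> {A. \<nu> A = 0} \<Longrightarrow> Z \<in> {A. \<nu> A = 0} \<Longrightarrow> Y \<union> Z \<in> {A. \<nu> A = 0}"
    proof -
      fix Y Z assume "Y \<in> {A. \<nu> A = 0}" "Z \<in> {A. \<nu> A = 0}"
      then have "\<nu> (Y \<union> Z) \<le> 0" using f(4)[of Y Z] by simp
      then show "Y \<union> Z \<in> {A. \<nu> A = 0}" using f(5)[of "Y \<union> Z"] by simp
    qed
    moreover have "{} \<in> {A. \<nu> A = 0}" using f(2) by simp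
    ultimately obtain F where F: "F \<in> Ult {A. \<nu> A = 0}" "A - B \<in> F"
      using ult_exists[of "{A. \<nu> A = 0}" "A - B"] by blast
    then have uf: "is_ultrafilter F" unfolding Ult_def by blast
    then have "A \<in> F" using F(2) unfolding is_ultrafilter_def by blast
    then have "B \<in> F" using sb F(1) unfolding ult_basic_def by blast
    then have "B \<inter> (A - B) \<in> F" using uf F(2) unfolding is_ultrafilter_def by blast
    then show False using uf unfolding is_ultrafilter_def by simp
  qed
  have "\<nu> A \<le> \<nu> ((A - B) \<union> B)" using f(1)[of A "(A - B) \<union> B"] by blast
  also have "\<dots> \<le> \<nu> (A - B) + \<nu> B" using f(4)[of "A - B" B] by simp
  finally show ?thesis using \<open>\<nu> (A - B) = 0\<close> by simp
qed

lemma basic_UNIV: "ult_basic I UNIV = Ult I"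
  unfolding ult_basic_def Ult_def is_ultrafilter_def by auto

lemma level_set:
  "{x \<in> S. t \<le> mu_uf x A} = (if t \<le> 0 then S else if t \<le> 1 then {x\<in>S. A \<in> x} else {})"
  unfolding mu_uf_def by auto

theorem corollary1p2:
  fixes \<nu> :: "nat set \<Rightarrow> real"
  assumes "abstract_upper_density \<nu>"
  shows "\<exists>\<rho> :: nat set set set \<Rightarrow> real.
           normalized_capacity (Ult {A. \<nu> A = 0}) (ult_borel {A. \<nu> A = 0}) \<rho> \<and>
           (\<forall>A :: nat set. \<nu> A =
              choquet_integral (Ult {A. \<nu> A = 0}) \<rho> (\<lambda>F. mu_uf F A))"
proof -
  note f = aud_facts[OF assms]
  define Z where "Z = {A. \<nu> A = 0}"
  define S where "S = Ult Z"
  define \<rho> where "\<rho> X = Inf {\<nu> A | A. X \<inter> S \<subseteq> ult_basic Z A}" for X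
  have ne: "{\<nu> A | A. X \<inter> S \<subseteq> ult_basic Z A} \<noteq> {}" for X
    using basic_UNIV[of Z] unfolding S_def by blast
  have bdd: "bdd_below {\<nu> A | A. X \<inter> S \<subseteq> ult_basic Z A}" for X
    using f(5) by (auto intro!: bdd_belowI[of _ 0])
  have mono: "\<rho> X \<le> \<rho> Y" if "X \<subseteq> Y" for X Y
    unfolding \<rho>_def
    by (rule cInf_superset_mono[OF ne bdd]) (use that in blast)
  have basic: "\<rho> (ult_basic Z A) = \<nu> A" for A
  proof -
    have bS: "ult_basic Z A \<inter> S = ult_basic Z A" unfolding S_def ult_basic_def by blast
    show ?thesis unfolding \<rho>_def bS
    proof (rule antisym)
      show "Inf {\<nu> B |B. ult_basic Z A \<subseteq> ult_basic Z B} \<le> \<nu> A"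
        by (rule cInf_lower) (use bdd[of "ult_basic Z A"] bS in auto)
      show "\<nu> A \<le> Inf {\<nu> B |B. ult_basic Z A \<subseteq> ult_basic Z B}"
        by (rule cInf_greatest) (use key_mono[OF assms] Z_def in auto)
    qed
  qed
  have r0: "\<rho> {} = 0"
  proof -
    have "ult_basic Z {} = {}"
      unfolding ult_basic_def Ult_def is_ultrafilter_def by auto
    then show ?thesis using basic[of "{}"] f(2) by simp
  qed
  have rS: "\<rho> S = 1" using basic[of UNIV] basic_UNIV[of Z] f(3) unfolding S_def by simp
  have cap: "normalized_capacity S (ult_borel Z) \<rho>"
    unfolding normalized_capacity_def using mono r0 rS by blast
  have int: "choquet_integral S \<rho> (\<lambda>F. mu_uf F A) = \<nu> A" for A
  proof -
    have bA: "{x\<in>S. A \<in> x} = ult_basic Z A" unfolding S_def ult_basic_def by blast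
    have e1: "(LBINT t:{0..}. \<rho> {x \<in> S. t \<le> mu_uf x A})
        = (LBINT t::real. \<nu> A * indicator {0..1} t + (1 - \<nu> A) * indicator {0} t)"
    proof -
      have eq: "(\<lambda>t. indicator {0..} t *\<^sub>R \<rho> {x \<in> S. t \<le> mu_uf x A})
         = (\<lambda>t::real. \<nu> A * indicator {0..1} t + (1 - \<nu> A) * indicator {0} t)"
        by (rule ext) (auto simp: level_set bA basic rS r0 indicator_def)
      show ?thesis unfolding set_lebesgue_integral_def eq by (rule refl)
    qed
    have e2: "(LBINT t:{..<0}. \<rho> {x \<in> S. t \<le> mu_uf x A} - 1) = 0"
      unfolding set_lebesgue_integral_def
      by (rule Bochner_Integration.integral_eq_zero_AE) (auto simp: level_set rS indicator_def)
    have i1: "integrable lborel (\<lambda>t. \<nu> A * indicator {0..1::real} t)" by simp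
    have i2: "integrable lborel (\<lambda>t. (1 - \<nu> A) * indicator {0::real} t)" by simp
    have "(LBINT t::real. \<nu> A * indicator {0..1} t + (1 - \<nu> A) * indicator {0} t)
        = \<nu> A * measure lborel {0..1::real} + (1 - \<nu> A) * measure lborel {0::real}"
      using i1 i2 by simp
    also have "\<dots> = \<nu> A" by simp
    finally show ?thesis unfolding choquet_integral_def e1 e2 by simp
  qed
  show ?thesis
    using cap int unfolding S_def Z_def by metis
qed

end
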